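(* $c(7)\ge 5$.
   Context: $\mathbb{F}_q$ is the finite field with $q$ elements. Hamming distance $d(u,v)=|\{i:u_i\ne v_i\}|$ on $\mathbb{F}_q^3$; $B(u)=\{v:d(u,v)\le1\}$; $E(u)=\bigcup_{\lambda\in\mathbb{F}_q}B(\lambda u)$. A set $\mathcal{H}\subseteq\mathbb{F}_q^3$ is a short covering if $\bigcup_{h\in\mathcal{H}}E(h)=\mathbb{F}_q^3$; $c(q)$ is the minimum cardinality of a short covering of $\mathbb{F}_q^3$. *)

theory Defs
  imports "HOL-Analysis.Finite_Cartesian_Product" "HOL-Library.Numeral_Type"
begin

text \<open>Vectors in \<open>F_q^n\<close> are \<open>'a ^ 'n\<close>; the field \<open>F_7\<close> is the numeral type \<open>7\<close>
  (integers mod 7), and \<open>F_7^3\<close> is \<open>7 ^ 3\<close>.\<close>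

definition hamming :: "'a ^ 'n::finite \<Rightarrow> 'a ^ 'n \<Rightarrow> nat" where
  "hamming u v = card {i. u $ i \<noteq> v $ i}"

definition hball :: "'a ^ 'n::finite \<Rightarrow> ('a ^ 'n) set" where
  "hball u = {v. hamming u v \<le> 1}"

definition Eset :: "'a::comm_ring_1 ^ 'n::finite \<Rightarrow> ('a ^ 'n) set" where
  "Eset u = (\<Union>c. hball (\<chi> i. c * u $ i))"

definition short_covering :: "('a::comm_ring_1 ^ 'n::finite) set \<Rightarrow> bool" where
  "short_covering H \<longleftrightarrow> (\<Union>h\<in>H. Eset h) = UNIV"

definition min_short_covering :: "('a::comm_ring_1 ^ 'n::finite) itself \<Rightarrow> nat" where
  "min_short_covering _ = (LEAST k. \<exists>H :: ('a ^ 'n) set. short_covering H \<and> card H = k)"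

end

theory Submission
  imports Defs
begin


lemma univ7: "(x::7) \<in> {0,1,2,3,4,5,6}"
proof (cases x)
  case (of_int z)
  then have "z \<in> {0,1,2,3,4,5,6}" by auto
  then show ?thesis using of_int by auto
qed
lemma nz: "(x::7)*y=0 \<Longrightarrow> x=0 \<or> y=0"
  using univ7[of x] univ7[of y] by auto
lemma nzm: "(x::7) \<noteq> 0 \<Longrightarrow> y \<noteq> 0 \<Longrightarrow> x*y \<noteq> 0"
  using nz by blast
lemma inv5: "(x::7) \<noteq> 0 \<Longrightarrow> x * x^5 = 1"
  using univ7[of x] by auto
lemma cancel7: "(c::7) \<noteq> 0 \<Longrightarrow> c*x = c*y \<Longrightarrow> x = y"
proof -
  assume c: "c \<noteq> 0" and e: "c*x = c*y"
  have "x = (c*c^5)*x" using inv5[OF c] by simp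
  also have "\<dots> = c^5*(c*x)" by (simp add: mult_ac)
  also have "\<dots> = c^5*(c*y)" using e by simp
  also have "\<dots> = (c*c^5)*y" by (simp add: mult_ac)
  finally show "x = y" using inv5[OF c] by simp
qed
lemma cancel7r: "(c::7) \<noteq> 0 \<Longrightarrow> x*c = y*c \<Longrightarrow> x = y"
  using cancel7[of c x y] by (simp add: mult.commute)
lemma univ3: "(x::3) \<in> {0,1,2}"
proof (cases x)
  case (of_int z)
  then have "z \<in> {0,1,2}" by auto
  then show ?thesis using of_int by auto
qed
definition tri :: "3 \<Rightarrow> 3 \<Rightarrow> 3 \<Rightarrow> bool" where "tri i j k \<longleftrightarrow> i\<noteq>j \<and> i\<noteq>k \<and> j\<noteq>k"
lemma tri_all: "tri i j k \<Longrightarrow> l = i \<or> l = j \<or> l = k"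
  using univ3[of i] univ3[of j] univ3[of k] univ3[of l] unfolding tri_def by auto
lemma tri_ex: "\<exists>j k. tri i j k"
proof -
  have "i = 0 \<or> i = 1 \<or> i = 2" using univ3[of i] by auto
  moreover have "tri 0 1 2" "tri 1 0 2" "tri 2 0 1" unfolding tri_def by simp_all
  ultimately show ?thesis by blast
qed
lemma c7: "card (UNIV - {0::7}) = 6" by simp

definition sc :: "7 \<Rightarrow> 7^3 \<Rightarrow> 7^3" where "sc c h = (\<chi> l. c * h$l)"
lemma sc_nth[simp]: "sc c h $ l = c * h $ l" by (simp add: sc_def)
lemma memE: "v \<in> Eset h \<longleftrightarrow> (\<exists>c. hamming (sc c h) v \<le> 1)"
  by (auto simp: Eset_def hball_def sc_def)
lemma ham1: "hamming u v \<le> 1 \<longleftrightarrow> (\<forall>l m. u$l \<noteq> v$l \<longrightarrow> u$m \<noteq> v$m \<longrightarrow> l = m)"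
  unfolding hamming_def using card_le_Suc0_iff_eq[of "{i. u $ i \<noteq> v $ i}"] by auto
lemma ham3: "tri i j k \<Longrightarrow> hamming u v \<le> 1 \<Longrightarrow>
   (u$i = v$i \<and> u$j = v$j) \<or> (u$i = v$i \<and> u$k = v$k) \<or> (u$j = v$j \<and> u$k = v$k)"
  unfolding ham1 tri_def by blast
lemma vec3_eq: assumes t: "tri i j k" shows "(v::'a^3) = w \<longleftrightarrow> v$i = w$i \<and> v$j = w$j \<and> v$k = w$k"
proof
  assume e: "v$i = w$i \<and> v$j = w$j \<and> v$k = w$k"
  have "v$l = w$l" for l using tri_all[OF t, of l] e by auto
  then show "v = w" by (simp add: vec_eq_iff)
qed simp

definition mk3 :: "3 \<Rightarrow> 3 \<Rightarrow> 'a \<Rightarrow> 'a \<Rightarrow> 'a \<Rightarrow> 'a^3" where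
  "mk3 i j a b c = (\<chi> l. if l = i then a else if l = j then b else c)"
lemma mk3_i: "tri i j k \<Longrightarrow> mk3 i j a b c $ i = a" by (simp add: mk3_def)
lemma mk3_j: "tri i j k \<Longrightarrow> mk3 i j a b c $ j = b" unfolding mk3_def tri_def by auto
lemma mk3_k: "tri i j k \<Longrightarrow> mk3 i j a b c $ k = c" unfolding mk3_def tri_def by auto
lemma mk3_all: assumes t: "tri i j k" shows "(\<forall>l. P (mk3 i j a b c $ l)) \<longleftrightarrow> P a \<and> P b \<and> P c"
proof
  assume "\<forall>l. P (mk3 i j a b c $ l)"
  then show "P a \<and> P b \<and> P c" using mk3_i[OF t] mk3_j[OF t] mk3_k[OF t] by metis
next
  assume e: "P a \<and> P b \<and> P c"
  show "\<forall>l. P (mk3 i j a b c $ l)"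
  proof
    fix l show "P (mk3 i j a b c $ l)" using tri_all[OF t, of l] e by (auto simp: mk3_i[OF t] mk3_j[OF t] mk3_k[OF t])
  qed
qed

definition T :: "3 \<Rightarrow> (7^3) set" where "T i = {v. v$i = 1 \<and> (\<forall>l. v$l \<noteq> 0)}"

lemma line_bound: "S \<subseteq> {v::7^3. \<forall>l. v$l \<noteq> 0} \<Longrightarrow> inj_on (\<lambda>v. v$m) S \<Longrightarrow> card S \<le> 6"
proof -
  assume a: "S \<subseteq> {v::7^3. \<forall>l. v$l \<noteq> 0}" and b: "inj_on (\<lambda>v. v$m) S"
  have "(\<lambda>v. v$m) ` S \<subseteq> UNIV - {0}" using a by auto
  then have "card S \<le> card (UNIV - {0::7})" by (rule card_inj_on_le[OF b]) auto
  then show ?thesis using c7 by simp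
qed

lemma card_T: assumes "tri i j k" shows "36 \<le> card (T i)"
proof -
  let ?A = "(UNIV - {0::7}) \<times> (UNIV - {0::7})"
  let ?f = "\<lambda>(x,y). mk3 i j (1::7) x y"
  have "inj_on ?f ?A"
    by (auto simp: inj_on_def vec3_eq[OF assms] mk3_i[OF assms] mk3_j[OF assms] mk3_k[OF assms])
  moreover have "?f ` ?A \<subseteq> T i"
  proof
    fix v assume "v \<in> ?f ` ?A"
    then obtain x y where v: "v = mk3 i j 1 x y" "x \<noteq> 0" "y \<noteq> 0" by auto
    have "\<forall>l. mk3 i j (1::7) x y $ l \<noteq> 0" using mk3_all[OF assms, of "\<lambda>z. z\<noteq>0" 1 x y] v by simp
    then show "v \<in> T i" using v mk3_i[OF assms] by (simp add: T_def)
  qed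
  ultimately have "card ?A \<le> card (T i)" by (intro card_inj_on_le) simp_all
  moreover have "card ?A = 36" by (simp add: card_cartesian_product)
  ultimately show ?thesis by simp
qed



lemma cov_pt: "(\<Union>h\<in>H. Eset h) = UNIV \<Longrightarrow> \<exists>h\<in>H. v \<in> Eset h" by blast

lemma factA_key:
  fixes s :: 7 and h :: "7^3"
  assumes t: "tri i j k" and hz: "h = 0 \<or> h$i \<noteq> 0"
    and v: "mk3 i j 0 1 s \<in> Eset h" and s: "s \<noteq> 0"
  shows "s * h$j = h$k \<and> h$j \<noteq> 0"
proof -
  let ?v = "mk3 i j (0::7) 1 s"
  obtain c where c: "hamming (sc c h) ?v \<le> 1" using v memE by blast
  note vi = mk3_i[OF t, of 0 1 s] and vj = mk3_j[OF t, of 0 1 s] and vk = mk3_k[OF t, of 0 1 s]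
  from ham3[OF t c] have
    "(c*h$i = 0 \<and> c*h$j = 1) \<or> (c*h$i = 0 \<and> c*h$k = s) \<or> (c*h$j = 1 \<and> c*h$k = s)"
    using vi vj vk by simp
  moreover have "c*h$i \<noteq> 0"
  proof
    assume "c*h$i = 0"
    then have "c = 0 \<or> h = 0" using nz hz by blast
    then have "c*h$j = 0 \<and> c*h$k = 0" by auto
    then show False using calculation s by auto
  qed
  ultimately have e: "c*h$j = 1 \<and> c*h$k = s" by auto
  then have "h$j \<noteq> 0" by auto
  moreover have "s * h$j = h$k"
  proof -
    have "s * h$j = (c*h$k)*h$j" using e by simp
    also have "\<dots> = (c*h$j)*h$k" by (simp add: mult_ac)
    finally show ?thesis using e by simp
  qed
  ultimately show ?thesis by simp
qed

lemma factA:
  fixes H :: "(7^3) set"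
  assumes cov: "(\<Union>h\<in>H. Eset h) = UNIV" and card: "card H < 6" and t: "tri i j k"
  shows "\<exists>h\<in>H. h \<noteq> 0 \<and> h$i = 0"
proof (rule ccontr)
  assume na: "\<not> ?thesis"
  define hh where "hh s = (SOME h. h \<in> H \<and> mk3 i j 0 1 s \<in> Eset h)" for s :: 7
  have hh: "hh s \<in> H \<and> mk3 i j 0 1 s \<in> Eset (hh s)" for s
  proof -
    have "\<exists>h. h \<in> H \<and> mk3 i j 0 1 s \<in> Eset h" using cov_pt[OF cov, of "mk3 i j 0 1 s"] by blast
    then show ?thesis unfolding hh_def by (rule someI_ex)
  qed
  have key: "s * hh s $ j = hh s $ k \<and> hh s $ j \<noteq> 0" if s0: "s \<noteq> 0" for s
  proof -
    have "hh s = 0 \<or> hh s $ i \<noteq> 0" using hh[of s] na by blast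
    then show ?thesis using factA_key[OF t _ _ s0] hh[of s] by blast
  qed
  have "inj_on hh (UNIV - {0})"
  proof (rule inj_onI)
    fix s s' assume a: "s \<in> UNIV - {0}" "s' \<in> UNIV - {0}" and e: "hh s = hh s'"
    have "s * hh s $ j = s' * hh s $ j" using key[of s] key[of s'] a e by simp
    then show "s = s'" using cancel7r[of "hh s $ j" s s'] key[of s] a by simp
  qed
  moreover have "hh ` (UNIV - {0}) \<subseteq> H" using hh by auto
  ultimately have "card (UNIV - {0::7}) \<le> card H" by (rule card_inj_on_le) simp
  then show False using card c7 by simp
qed

lemma two0_empty:
  assumes "l \<noteq> m" "h$l = 0" "h$m = 0"
  shows "Eset h \<inter> T i = {}"
proof -
  { fix v assume v: "v \<in> Eset h" "v \<in> T i"
    then obtain c where c: "hamming (sc c h) v \<le> 1" using memE by blast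
    have "v$l \<noteq> 0" "v$m \<noteq> 0" using v by (auto simp: T_def)
    then have "sc c h $ l \<noteq> v$l" "sc c h $ m \<noteq> v$m" using assms by auto
    then have False using c assms(1) unfolding ham1 by blast }
  then show ?thesis by blast
qed

lemma one0_sub:
  assumes t: "tri p q r" and "h$p = 0"
  shows "Eset h \<inter> T i \<subseteq> {v\<in>T i. v$q * h$r = v$r * h$q}"
proof
  fix v assume v: "v \<in> Eset h \<inter> T i"
  then obtain c where c: "hamming (sc c h) v \<le> 1" using memE by blast
  have "v$p \<noteq> 0" using v by (auto simp: T_def)
  then have "sc c h $ p \<noteq> v$p" using assms by simp
  then have e: "c*h$q = v$q \<and> c*h$r = v$r" using ham3[OF t c] by auto
  have "v$q * h$r = (c*h$q) * h$r" using e by simp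
  also have "\<dots> = (c*h$r) * h$q" by (simp add: mult_ac)
  finally have "v$q * h$r = v$r * h$q" using e by simp
  then show "v \<in> {v\<in>T i. v$q * h$r = v$r * h$q}" using v by auto
qed

lemma bound6:
  assumes t: "tri p q r" and hq: "h$q \<noteq> 0" and hr: "h$r \<noteq> 0"
  shows "card {v\<in>T i. v$q * h$r = v$r * h$q} \<le> 6"
proof -
  let ?S = "{v\<in>T i. v$q * h$r = v$r * h$q}"
  have sub: "?S \<subseteq> {v::7^3. \<forall>l. v$l \<noteq> 0}" by (auto simp: T_def)
  have tt: "tri q p r" "tri r p q" using t unfolding tri_def by auto
  have "i = p \<or> i = q \<or> i = r" using tri_all[OF t] by blast
  moreover
  { assume "i = p"
    have "inj_on (\<lambda>v. v$q) ?S"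
    proof (rule inj_onI)
      fix v w assume v: "v \<in> ?S" and w: "w \<in> ?S" and e: "v$q = w$q"
      have "v$r * h$q = w$r * h$q" using v w e by auto
      then have "v$r = w$r" using cancel7r hq by blast
      then show "v = w" using v w e \<open>i = p\<close> by (simp add: vec3_eq[OF t] T_def)
    qed
    then have ?thesis using line_bound[OF sub] by blast }
  moreover
  { assume "i = q"
    have "inj_on (\<lambda>v. v$p) ?S"
    proof (rule inj_onI)
      fix v w assume v: "v \<in> ?S" and w: "w \<in> ?S" and e: "v$p = w$p"
      have "v$r * h$q = w$r * h$q" using v w e \<open>i = q\<close> by (auto simp: T_def)
      then have "v$r = w$r" using cancel7r hq by blast
      then show "v = w" using v w e \<open>i = q\<close> by (simp add: vec3_eq[OF t] T_def)
    qed
    then have ?thesis using line_bound[OF sub] by blast }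
  moreover
  { assume "i = r"
    have "inj_on (\<lambda>v. v$p) ?S"
    proof (rule inj_onI)
      fix v w assume v: "v \<in> ?S" and w: "w \<in> ?S" and e: "v$p = w$p"
      have "v$q * h$r = w$q * h$r" using v w e \<open>i = r\<close> by (auto simp: T_def)
      then have "v$q = w$q" using cancel7r hr by blast
      then show "v = w" using v w e \<open>i = r\<close> by (simp add: vec3_eq[OF t] T_def)
    qed
    then have ?thesis using line_bound[OF sub] by blast }
  ultimately show ?thesis by blast
qed




lemma inv5': "(x::7) \<noteq> 0 \<Longrightarrow> x^5 * x = 1" using inv5[of x] by (simp add: mult.commute)
lemma pow5_nz: "(x::7) \<noteq> 0 \<Longrightarrow> x^5 \<noteq> 0" using inv5[of x] by auto

lemma cross:
  fixes h :: "7^3"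
  assumes t: "tri i j k" and v: "v \<in> Eset h" and vT: "v \<in> T i"
  shows "v$j*h$i = h$j \<or> v$k*h$i = h$k \<or> v$j*h$k = v$k*h$j"
proof -
  obtain c where c: "hamming (sc c h) v \<le> 1" using v memE by blast
  have vi: "v$i = 1" using vT by (simp add: T_def)
  from ham3[OF t c] have d: "(c*h$i = v$i \<and> c*h$j = v$j) \<or> (c*h$i = v$i \<and> c*h$k = v$k) \<or> (c*h$j = v$j \<and> c*h$k = v$k)"
    by simp
  then show ?thesis
  proof (elim disjE conjE)
    assume a: "c*h$i = v$i" "c*h$j = v$j"
    have "v$j*h$i = (c*h$j)*h$i" using a by simp
    also have "\<dots> = (c*h$i)*h$j" by (simp add: mult_ac)
    finally show ?thesis using a vi by simp
  next
    assume a: "c*h$i = v$i" "c*h$k = v$k"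
    have "v$k*h$i = (c*h$k)*h$i" using a by simp
    also have "\<dots> = (c*h$i)*h$k" by (simp add: mult_ac)
    finally show ?thesis using a vi by simp
  next
    assume a: "c*h$j = v$j" "c*h$k = v$k"
    have "v$j*h$k = (c*h$j)*h$k" using a by simp
    also have "\<dots> = (c*h$k)*h$j" by (simp add: mult_ac)
    finally show ?thesis using a by simp
  qed
qed

lemma card_R:
  fixes h :: "7^3"
  assumes t: "tri i j k" and hi: "h$i \<noteq> 0"
  shows "card {v\<in>T i. v$j*h$i = h$j} \<le> 6"
proof -
  let ?S = "{v\<in>T i. v$j*h$i = h$j}"
  have sub: "?S \<subseteq> {v::7^3. \<forall>l. v$l \<noteq> 0}" by (auto simp: T_def)
  have "inj_on (\<lambda>v. v$k) ?S"
  proof (rule inj_onI)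
    fix v w assume v: "v \<in> ?S" and w: "w \<in> ?S" and e: "v$k = w$k"
    have "v$j * h$i = w$j * h$i" using v w by simp
    then have "v$j = w$j" using cancel7r hi by blast
    then show "v = w" using v w e by (simp add: vec3_eq[OF t] T_def)
  qed
  then show ?thesis using line_bound[OF sub] by blast
qed

lemma tri_swap: "tri i j k \<Longrightarrow> tri i k j" unfolding tri_def by auto

definition ctr :: "7^3 \<Rightarrow> 3 \<Rightarrow> 7^3" where "ctr h i = sc (h$i^5) h"

lemma ctr_props:
  fixes h :: "7^3"
  assumes t: "tri i j k" and hn: "\<forall>l. h$l \<noteq> 0"
  shows "ctr h i \<in> {v\<in>T i. v$j*h$i = h$j}" "ctr h i \<in> {v\<in>T i. v$k*h$i = h$k}"
    "ctr h i \<in> {v\<in>T i. v$j*h$k = v$k*h$j}"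
proof -
  have hi: "h$i \<noteq> 0" using hn by blast
  have ih: "h$i^5 * h$i = 1" using inv5'[OF hi] .
  have inz: "h$i^5 \<noteq> 0" using pow5_nz[OF hi] .
  have T: "ctr h i \<in> T i" unfolding T_def ctr_def using ih inz hn nzm by auto
  have "ctr h i $ j * h$i = h$j * (h$i^5 * h$i)" by (simp add: ctr_def mult_ac)
  then have 1: "ctr h i $ j * h$i = h$j" using ih by simp
  have "ctr h i $ k * h$i = h$k * (h$i^5 * h$i)" by (simp add: ctr_def mult_ac)
  then have 2: "ctr h i $ k * h$i = h$k" using ih by simp
  have 3: "ctr h i $ j * h$k = ctr h i $ k * h$j" by (simp add: ctr_def mult_ac)
  show "ctr h i \<in> {v\<in>T i. v$j*h$i = h$j}" using T 1 by simp
  show "ctr h i \<in> {v\<in>T i. v$k*h$i = h$k}" using T 2 by simp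
  show "ctr h i \<in> {v\<in>T i. v$j*h$k = v$k*h$j}" using T 3 by simp
qed

lemma bound16:
  fixes h :: "7^3"
  assumes t: "tri i j k" and hn: "\<forall>l. h$l \<noteq> 0"
  shows "card (Eset h \<inter> T i) \<le> 16"
proof -
  let ?R = "{v\<in>T i. v$j*h$i = h$j}" and ?C = "{v\<in>T i. v$k*h$i = h$k}"
    and ?S = "{v\<in>T i. v$j*h$k = v$k*h$j}" and ?c = "ctr h i"
  have hi: "h$i \<noteq> 0" using hn by blast
  have cp: "?c \<in> ?R" "?c \<in> ?C" "?c \<in> ?S" using ctr_props[OF t hn] by blast+
  have "Eset h \<inter> T i \<subseteq> ?R \<union> (?C - {?c}) \<union> (?S - {?c})"
  proof
    fix v assume v: "v \<in> Eset h \<inter> T i"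
    have "v \<in> ?R \<or> v \<in> ?C \<or> v \<in> ?S" using cross[OF t, of v h] v by auto
    then show "v \<in> ?R \<union> (?C - {?c}) \<union> (?S - {?c})" using cp(1) by blast
  qed
  then have "card (Eset h \<inter> T i) \<le> card (?R \<union> (?C - {?c}) \<union> (?S - {?c}))"
    by (intro card_mono) simp_all
  also have "\<dots> \<le> card ?R + card (?C - {?c}) + card (?S - {?c})"
    by (meson add_mono card_Un_le le_refl order_trans)
  also have "card (?C - {?c}) = card ?C - 1" using cp(2) by (simp add: card_Diff_singleton)
  also have "card (?S - {?c}) = card ?S - 1" using cp(3) by (simp add: card_Diff_singleton)
  finally have f: "card (Eset h \<inter> T i) \<le> card ?R + (card ?C - 1) + (card ?S - 1)" .
  have "card ?S \<le> 6" using bound6[OF t, of h i] hn by blast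
  then show ?thesis
    using f card_R[OF t hi] card_R[OF tri_swap[OF t] hi] by linarith
qed




lemma gen_bound:
  fixes h :: "7^3"
  assumes t: "tri i j k"
  shows "(\<exists>l m. l \<noteq> m \<and> h$l = 0 \<and> h$m = 0) \<Longrightarrow> card (Eset h \<inter> T i) = 0"
    and "h$p = 0 \<Longrightarrow> \<not>(\<exists>l m. l \<noteq> m \<and> h$l = 0 \<and> h$m = 0) \<Longrightarrow> card (Eset h \<inter> T i) \<le> 6"
proof -
  assume "\<exists>l m. l \<noteq> m \<and> h$l = 0 \<and> h$m = 0"
  then obtain l m where "l \<noteq> m" "h$l = 0" "h$m = 0" by blast
  then show "card (Eset h \<inter> T i) = 0" using two0_empty by simp
next
  assume p: "h$p = 0" and n2: "\<not>(\<exists>l m. l \<noteq> m \<and> h$l = 0 \<and> h$m = 0)"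
  obtain q r where tp: "tri p q r" using tri_ex by blast
  have "p \<noteq> q" "p \<noteq> r" using tp unfolding tri_def by auto
  then have hq: "h$q \<noteq> 0" and hr: "h$r \<noteq> 0" using n2 p by blast+
  have "card (Eset h \<inter> T i) \<le> card {v\<in>T i. v$q * h$r = v$r * h$q}"
    using one0_sub[OF tp p, of i] by (intro card_mono) simp_all
  then show "card (Eset h \<inter> T i) \<le> 6" using bound6[OF tp hq hr, of i] by linarith
qed

lemma hard14:
  fixes h g :: "7^3"
  assumes t: "tri i j k" and gj: "g$j \<noteq> 0" and gk: "g$k \<noteq> 0"
  shows "card (Eset h \<inter> T i - {v\<in>T i. v$j*g$k = v$k*g$j}) \<le> 14"
proof -
  let ?D = "{v\<in>T i. v$j*g$k = v$k*g$j}"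
  have mono: "card (Eset h \<inter> T i - ?D) \<le> card (Eset h \<inter> T i)" by (intro card_mono) auto
  consider (two) "\<exists>l m. l \<noteq> m \<and> h$l = 0 \<and> h$m = 0"
    | (one) p where "h$p = 0" "\<not>(\<exists>l m. l \<noteq> m \<and> h$l = 0 \<and> h$m = 0)"
    | (none) "\<forall>l. h$l \<noteq> 0" by blast
  then show ?thesis
  proof cases
    case two then show ?thesis using gen_bound(1)[OF t two] mono by linarith
  next
    case one then show ?thesis using gen_bound(2)[OF t one(1) one(2)] mono by linarith
  next
    case none
    let ?R = "{v\<in>T i. v$j*h$i = h$j}" and ?C = "{v\<in>T i. v$k*h$i = h$k}"
      and ?S = "{v\<in>T i. v$j*h$k = v$k*h$j}" and ?c = "ctr h i"
    have hi: "h$i \<noteq> 0" and hj: "h$j \<noteq> 0" and hk: "h$k \<noteq> 0" using none by blast+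
    have cp: "?c \<in> ?R" "?c \<in> ?C" "?c \<in> ?S" using ctr_props[OF t none] by blast+
    have cR: "card ?R \<le> 6" using card_R[OF t hi] .
    have cC: "card ?C \<le> 6" using card_R[OF tri_swap[OF t] hi] .
    have cS: "card ?S \<le> 6" using bound6[OF t hj hk, of i] .
    have ih: "h$i^5 * h$i = 1" using inv5'[OF hi] .
    have inz: "h$i^5 \<noteq> 0" using pow5_nz[OF hi] .
    show ?thesis
    proof (cases "?c \<in> ?D")
      case True
      have cj: "?c $ j = h$i^5 * h$j" "?c $ k = h$i^5 * h$k" by (simp_all add: ctr_def)
      have "h$i^5 * (h$j * g$k) = h$i^5 * (h$k * g$j)"
        using True cj by (simp add: mult_ac)
      then have hg: "h$j * g$k = h$k * g$j" using cancel7 inz by blast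
      have SD: "?S \<subseteq> ?D"
      proof
        fix v assume v: "v \<in> ?S"
        have "h$j * (v$j * g$k) = v$j * (h$j * g$k)" by (simp add: mult_ac)
        also have "\<dots> = v$j * (h$k * g$j)" using hg by simp
        also have "\<dots> = (v$j * h$k) * g$j" by (simp add: mult_ac)
        also have "\<dots> = (v$k * h$j) * g$j" using v by simp
        also have "\<dots> = h$j * (v$k * g$j)" by (simp add: mult_ac)
        finally have "v$j * g$k = v$k * g$j" using cancel7 hj by blast
        then show "v \<in> ?D" using v by simp
      qed
      have "Eset h \<inter> T i - ?D \<subseteq> (?R - {?c}) \<union> (?C - {?c})"
      proof
        fix v assume v: "v \<in> Eset h \<inter> T i - ?D"
        have "v \<in> ?R \<or> v \<in> ?C \<or> v \<in> ?S" using cross[OF t, of v h] v by auto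
        moreover have "v \<notin> ?S" using SD v by blast
        moreover have "v \<noteq> ?c" using True v by blast
        ultimately show "v \<in> (?R - {?c}) \<union> (?C - {?c})" by blast
      qed
      then have "card (Eset h \<inter> T i - ?D) \<le> card ((?R - {?c}) \<union> (?C - {?c}))"
        by (intro card_mono) simp_all
      also have "\<dots> \<le> card (?R - {?c}) + card (?C - {?c})" by (rule card_Un_le)
      also have "card (?R - {?c}) = card ?R - 1" using cp(1) by (simp add: card_Diff_singleton)
      also have "card (?C - {?c}) = card ?C - 1" using cp(2) by (simp add: card_Diff_singleton)
      finally show ?thesis using cR cC by linarith
    next
      case False
      define r where "r = mk3 i j (1::7) (h$j * h$i^5) (h$j * h$i^5 * g$k * g$j^5)"
      define c' where "c' = mk3 i j (1::7) (h$k * h$i^5 * g$j * g$k^5) (h$k * h$i^5)"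
      have gj5: "g$j^5 * g$j = 1" using inv5'[OF gj] .
      have gk5: "g$k^5 * g$k = 1" using inv5'[OF gk] .
      have gj5n: "g$j^5 \<noteq> 0" using pow5_nz[OF gj] .
      have gk5n: "g$k^5 \<noteq> 0" using pow5_nz[OF gk] .
      note mi = mk3_i[OF t] and mj = mk3_j[OF t] and mk = mk3_k[OF t]
      have rT: "r \<in> T i"
      proof -
        have "\<forall>l. r $ l \<noteq> 0" unfolding r_def mk3_all[OF t, of "\<lambda>z. z \<noteq> 0"]
          using hj inz gk gj5n nzm by simp
        then show ?thesis unfolding T_def r_def using mi by simp
      qed
      have c'T: "c' \<in> T i"
      proof -
        have "\<forall>l. c' $ l \<noteq> 0" unfolding c'_def mk3_all[OF t, of "\<lambda>z. z \<noteq> 0"]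
          using hk inz gj gk5n nzm by simp
        then show ?thesis unfolding T_def c'_def using mi by simp
      qed
      have "r $ j * h$i = h$j * (h$i^5 * h$i)" unfolding r_def mj by (simp add: mult_ac)
      then have rR: "r \<in> ?R" using rT ih by simp
      have "r $ k * g$j = h$j * h$i^5 * g$k * (g$j^5 * g$j)" unfolding r_def mk by (simp add: mult_ac)
      then have "r $ k * g$j = r $ j * g$k" using gj5 unfolding r_def mj by simp
      then have rD: "r \<in> ?D" using rT by simp
      have "c' $ k * h$i = h$k * (h$i^5 * h$i)" unfolding c'_def mk by (simp add: mult_ac)
      then have cC': "c' \<in> ?C" using c'T ih by simp
      have "c' $ j * g$k = h$k * h$i^5 * g$j * (g$k^5 * g$k)" unfolding c'_def mj by (simp add: mult_ac)
      then have "c' $ j * g$k = c' $ k * g$j" using gk5 unfolding c'_def mk by simp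
      then have cD: "c' \<in> ?D" using c'T by simp
      have rc: "r \<noteq> ?c" using rD False by blast
      have cc: "c' \<noteq> ?c" using cD False by blast
      have "Eset h \<inter> T i - ?D \<subseteq> (?R - {r}) \<union> (?C - {?c, c'}) \<union> (?S - {?c})"
      proof
        fix v assume v: "v \<in> Eset h \<inter> T i - ?D"
        have "v \<in> ?R \<or> v \<in> ?C \<or> v \<in> ?S" using cross[OF t, of v h] v by auto
        moreover have "v \<noteq> r" "v \<noteq> c'" using v rD cD by blast+
        ultimately show "v \<in> (?R - {r}) \<union> (?C - {?c, c'}) \<union> (?S - {?c})"
          using cp(1) rc by blast
      qed
      then have "card (Eset h \<inter> T i - ?D) \<le> card ((?R - {r}) \<union> (?C - {?c, c'}) \<union> (?S - {?c}))"
        by (intro card_mono) simp_all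
      also have "\<dots> \<le> card (?R - {r}) + card (?C - {?c, c'}) + card (?S - {?c})"
        by (meson add_mono card_Un_le le_refl order_trans)
      also have "card (?R - {r}) = card ?R - 1" using rR by (simp add: card_Diff_singleton)
      also have "card (?C - {?c, c'}) = card ?C - 2"
      proof -
        have "{?c, c'} \<subseteq> ?C" using cp(2) cC' by blast
        moreover have "card {?c, c'} = 2" using cc by simp
        ultimately show ?thesis by (simp add: card_Diff_subset)
      qed
      also have "card (?S - {?c}) = card ?S - 1" using cp(3) by (simp add: card_Diff_singleton)
      finally show ?thesis using cR cC cS by linarith
    qed
  qed
qed




lemma count_lower:
  fixes H :: "(7^3) set"
  assumes cov: "(\<Union>h\<in>H. Eset h) = UNIV" and t: "tri i j k"
  shows "36 \<le> (\<Sum>h\<in>H. card (Eset h \<inter> T i))"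
proof -
  have "T i \<subseteq> (\<Union>h\<in>H. Eset h \<inter> T i)" using cov by blast
  then have "card (T i) \<le> card (\<Union>h\<in>H. Eset h \<inter> T i)" by (intro card_mono) simp_all
  also have "\<dots> \<le> (\<Sum>h\<in>H. card (Eset h \<inter> T i))" by (rule card_UN_le) simp
  finally show ?thesis using card_T[OF t] by linarith
qed

definition two0 :: "7^3 \<Rightarrow> bool" where "two0 h \<longleftrightarrow> (\<exists>l m. l \<noteq> m \<and> h$l = 0 \<and> h$m = 0)"

lemma hardcase:
  fixes H :: "(7^3) set"
  assumes cov: "(\<Union>h\<in>H. Eset h) = UNIV" and gH: "g \<in> H" and eH: "e \<in> H"
    and gp: "g$p = 0" and g1: "\<not> two0 g" and e2: "two0 e" and cH: "card (H - {g,e}) \<le> 2"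
  shows False
proof -
  obtain j k where t: "tri p j k" using tri_ex by blast
  have "p \<noteq> j" "p \<noteq> k" using t unfolding tri_def by auto
  then have gj: "g$j \<noteq> 0" and gk: "g$k \<noteq> 0" using g1 gp unfolding two0_def by blast+
  let ?D = "{v\<in>T p. v$j*g$k = v$k*g$j}"
  have eE: "Eset e \<inter> T p = {}" using e2 two0_empty unfolding two0_def by blast
  have gE: "Eset g \<inter> T p \<subseteq> ?D" using one0_sub[OF t gp, of p] by simp
  have "T p - ?D \<subseteq> (\<Union>h\<in>H - {g,e}. Eset h \<inter> T p - ?D)"
  proof
    fix v assume v: "v \<in> T p - ?D"
    obtain h where h: "h \<in> H" "v \<in> Eset h" using cov by blast
    have "h \<noteq> e" using eE h v by blast
    moreover have "h \<noteq> g" using gE h v by blast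
    ultimately show "v \<in> (\<Union>h\<in>H - {g,e}. Eset h \<inter> T p - ?D)" using h v by blast
  qed
  then have "card (T p - ?D) \<le> card (\<Union>h\<in>H - {g,e}. Eset h \<inter> T p - ?D)"
    by (intro card_mono) simp_all
  also have "\<dots> \<le> (\<Sum>h\<in>H - {g,e}. card (Eset h \<inter> T p - ?D))" by (rule card_UN_le) simp
  also have "\<dots> \<le> (\<Sum>h\<in>H - {g,e}. 14)" by (intro sum_mono hard14[OF t gj gk])
  also have "\<dots> \<le> 28" using cH by simp
  finally have a: "card (T p - ?D) \<le> 28" .
  have "card (T p) - card ?D \<le> card (T p - ?D)" by (rule diff_card_le_card_Diff) simp
  then show False using a card_T[OF t] bound6[OF t gj gk, of p] by linarith
qed

lemma bound_any:
  fixes h :: "7^3"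
  assumes t: "tri i j k"
  shows "h \<noteq> 0 \<Longrightarrow> \<forall>l. h$l \<noteq> 0 \<Longrightarrow> card (Eset h \<inter> T i) \<le> 16"
    and "two0 h \<Longrightarrow> card (Eset h \<inter> T i) = 0"
    and "h$p = 0 \<Longrightarrow> card (Eset h \<inter> T i) \<le> 6"
proof -
  show "\<forall>l. h$l \<noteq> 0 \<Longrightarrow> card (Eset h \<inter> T i) \<le> 16" using bound16[OF t] by blast
  show "two0 h \<Longrightarrow> card (Eset h \<inter> T i) = 0" using gen_bound(1)[OF t] unfolding two0_def by blast
  show "h$p = 0 \<Longrightarrow> card (Eset h \<inter> T i) \<le> 6"
    using gen_bound(1)[OF t, of h] gen_bound(2)[OF t, of h p] by (cases "\<exists>l m. l \<noteq> m \<and> h$l = 0 \<and> h$m = 0") auto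
qed

lemma main:
  fixes H :: "(7^3) set"
  assumes sc: "short_covering H"
  shows "5 \<le> card H"
proof (rule ccontr)
  assume "\<not> 5 \<le> card H"
  then have cH: "card H \<le> 4" by simp
  have cov: "(\<Union>h\<in>H. Eset h) = UNIV" using sc unfolding short_covering_def .
  have t0: "tri 0 1 2" unfolding tri_def by simp
  have A: "\<exists>h\<in>H. h \<noteq> 0 \<and> h$p = 0" for p
  proof -
    obtain j k where "tri p j k" using tri_ex by blast
    then show ?thesis using factA[OF cov _ ] cH by simp
  qed
  define Z where "Z = {h\<in>H. h \<noteq> 0 \<and> (\<exists>p. h$p = 0)}"
  have ZH: "Z \<subseteq> H" unfolding Z_def by blast
  have cZA: "card Z + card (H - Z) = card H"
    using ZH card_Diff_subset[of Z H] card_mono[of H Z] by simp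
  have sumZA: "(\<Sum>h\<in>H. f h) = (\<Sum>h\<in>Z. f h) + (\<Sum>h\<in>H - Z. f h)" for f :: "7^3 \<Rightarrow> nat"
    using sum.subset_diff[OF ZH] by (simp add: add.commute)
  let ?f = "\<lambda>h. card (Eset h \<inter> T 0)"
  have fA: "?f h \<le> 16" if "h \<in> H - Z" for h
  proof (cases "h = 0")
    case True
    then have "two0 h" unfolding two0_def by (intro exI[of _ 0] exI[of _ 1]) simp
    then show ?thesis using bound_any(2)[OF t0] by simp
  next
    case False
    then have "\<forall>l. h$l \<noteq> 0" using that unfolding Z_def by blast
    then show ?thesis using bound_any(1)[OF t0 False] by simp
  qed
  have fZ: "?f h \<le> 6" if hZ: "h \<in> Z" for h
  proof -
    obtain p where "h$p = 0" using hZ unfolding Z_def by blast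
    then show ?thesis using bound_any(3)[OF t0] by blast
  qed
  have S: "36 \<le> 6 * card Z + 16 * card (H - Z)"
  proof -
    have "36 \<le> (\<Sum>h\<in>H. ?f h)" using count_lower[OF cov t0] .
    also have "\<dots> = (\<Sum>h\<in>Z. ?f h) + (\<Sum>h\<in>H - Z. ?f h)" by (rule sumZA)
    also have "\<dots> \<le> (\<Sum>h\<in>Z. 6) + (\<Sum>h\<in>H - Z. 16)"
      by (intro add_mono sum_mono fZ fA) auto
    finally show ?thesis by (simp add: mult.commute)
  qed
  have "card Z \<le> 1 \<or> card Z = 2 \<or> card Z \<ge> 3" by linarith
  moreover
  { assume "card Z \<ge> 3" then have False using S cZA cH by linarith }
  moreover
  { assume c1: "card Z \<le> 1"
    obtain z where z: "z \<in> H" "z \<noteq> 0" "z$0 = 0" using A[of 0] by blast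
    then have zZ: "z \<in> Z" unfolding Z_def by blast
    have uniq: "\<And>w. w \<in> Z \<Longrightarrow> w = z" using c1 zZ card_le_Suc0_iff_eq[of Z] by auto
    have "z$p = 0" for p
    proof -
      obtain w where w: "w \<in> H" "w \<noteq> 0" "w$p = 0" using A[of p] by blast
      then have "w \<in> Z" unfolding Z_def by blast
      then show ?thesis using uniq w by simp
    qed
    then have "z = 0" by (simp add: vec_eq_iff)
    then have False using z by simp }
  moreover
  { assume c2: "card Z = 2"
    then obtain z1 z2 where zz: "Z = {z1, z2}" "z1 \<noteq> z2" by (meson card_2_iff)
    have zin: "z1 \<in> H" "z2 \<in> H" "z1 \<in> Z" "z2 \<in> Z" using zz ZH by auto
    have cR: "card (H - {z1, z2}) \<le> 2" using cZA zz c2 cH by simp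
    have zero: "\<exists>p. z$p = 0" if "z \<in> Z" for z using that unfolding Z_def by blast
    have cover: "z1$p = 0 \<or> z2$p = 0" for p
    proof -
      obtain w where w: "w \<in> H" "w \<noteq> 0" "w$p = 0" using A[of p] by blast
      then have "w \<in> Z" unfolding Z_def by blast
      then show ?thesis using zz w by auto
    qed
    have False
    proof (cases "two0 z1")
      case t1: True
      show False
      proof (cases "two0 z2")
        case True
        have "(\<Sum>h\<in>H. ?f h) = (\<Sum>h\<in>Z. ?f h) + (\<Sum>h\<in>H - Z. ?f h)" by (rule sumZA)
        also have "(\<Sum>h\<in>Z. ?f h) = 0"
          using bound_any(2)[OF t0, of z1] bound_any(2)[OF t0, of z2] t1 True zz by simp
        also have "(\<Sum>h\<in>H - Z. ?f h) \<le> (\<Sum>h\<in>H - Z. 16)" by (intro sum_mono fA)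
        finally have "(\<Sum>h\<in>H. ?f h) \<le> 16 * card (H - Z)" by simp
        then show False using count_lower[OF cov t0] cR zz by simp
      next
        case False
        obtain p where "z2$p = 0" using zero zin by blast
        then show False using hardcase[OF cov zin(2) zin(1) _ False t1] cR by (simp add: insert_commute)
      qed
    next
      case f1: False
      show False
      proof (cases "two0 z2")
        case True
        obtain p where "z1$p = 0" using zero zin by blast
        then show False using hardcase[OF cov zin(1) zin(2) _ f1 True] cR by simp
      next
        case False
        have d: "(0::3) \<noteq> 1" "(0::3) \<noteq> 2" "(1::3) \<noteq> 2" by simp_all
        show False using cover[of 0] cover[of 1] cover[of 2] f1 False d unfolding two0_def by blast
      qed
    qed }
  ultimately show False by blast
qed

theorem proposition19:
  shows "5 \<le> min_short_covering TYPE(7 ^ 3)"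
proof -
  have "v \<in> Eset v" for v :: "7^3"
  proof -
    have "sc 1 v = v" by (simp add: vec_eq_iff)
    then have "hamming (sc 1 v) v = 0" by (simp add: hamming_def)
    then show ?thesis unfolding memE by (intro exI[of _ 1]) simp
  qed
  then have "short_covering (UNIV :: (7^3) set)" unfolding short_covering_def by blast
  then have ex: "\<exists>k H. short_covering (H :: (7^3) set) \<and> card H = k" by blast
  obtain H :: "(7^3) set" where H: "short_covering H"
    "card H = (LEAST k. \<exists>H :: (7^3) set. short_covering H \<and> card H = k)"
    using LeastI_ex[of "\<lambda>k. \<exists>H :: (7^3) set. short_covering H \<and> card H = k"] ex by blast
  show ?thesis unfolding min_short_covering_def using main[OF H(1)] H(2) by simp
qed


end
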